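(* Every sub-space-time $(M,D,g,T)$ that is compact in the Alexandrov topology (in particular every compact space-time) fails to be chronological, i.e. there exists $p\in M$ with $p\ll p$.
   Context: A sub-space-time is a quadruple $(M,D,g,T)$ where $M$ is a connected smooth manifold, $D$ is a smooth bracket-generating distribution on $M$ of rank $k$ with $2\le k<\dim M$, $g$ is a smoothly varying non-degenerate symmetric bilinear form on the fibres $D_p$ of index $1$, and $T$ is a globally defined smooth horizontal vector field with $g(T,T)<0$. A horizontal curve is an absolutely continuous curve with $\dot\gamma\in D$ a.e. and $\dot\gamma$ locally square integrable w.r.t. an auxiliary Riemannian metric; it is timelike future directed (t.f.d.) if a.e. $g(\dot\gamma,\dot\gamma)<0$ and $g(T,\dot\gamma)<0$. $p\ll q$ means there is a horizontal t.f.d. curve from $p$ to $q$; $I^+(p)=\{q:p\ll q\}$, $I^-(p)=\{q:q\ll p\}$. The Alexandrov topology is the topology on $M$ generated by the subbasis $\{I^+(p),I^-(p):p\in M\}$. A space-time is a smooth connected manifold with a Lorentzian metric and a timelike vector field (the case $D=TM$). The sub-space-time is chronological if there is no $p$ with $p\ll p$. *)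

theory Defs
  imports "HOL-Analysis.Analysis"
begin

fun dd :: "'a::real_normed_vector list \<Rightarrow> ('a \<Rightarrow> 'b::real_normed_vector) \<Rightarrow> 'a \<Rightarrow> 'b" where
  "dd [] f = f"
| "dd (v # vs) f = (\<lambda>x. frechet_derivative (dd vs f) (at x) v)"

definition smooth_on :: "'a::real_normed_vector set \<Rightarrow> ('a \<Rightarrow> 'b::real_normed_vector) \<Rightarrow> bool" where
  "smooth_on U f \<longleftrightarrow> (\<forall>vs. \<forall>x\<in>U. dd vs f differentiable (at x))"

definition smooth_on_set :: "'a::real_normed_vector set \<Rightarrow> ('a \<Rightarrow> 'b::real_normed_vector) \<Rightarrow> bool" where
  "smooth_on_set M f \<longleftrightarrow>
     (\<forall>p\<in>M. \<exists>U h. open U \<and> p \<in> U \<and> smooth_on U h \<and> (\<forall>q\<in>M \<inter> U. h q = f q))"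

definition submanifold :: "'a::euclidean_space set \<Rightarrow> nat \<Rightarrow> bool" where
  "submanifold M m \<longleftrightarrow>
     (\<forall>p\<in>M. \<exists>U V (\<phi>::'a \<Rightarrow> 'a) \<psi> B.
        open U \<and> open V \<and> p \<in> U \<and> smooth_on U \<phi> \<and> smooth_on V \<psi> \<and>
        \<phi> ` U = V \<and> (\<forall>x\<in>U. \<psi> (\<phi> x) = x) \<and>
        B \<subseteq> Basis \<and> card B = m \<and>
        \<phi> ` (M \<inter> U) = V \<inter> {y. \<forall>i\<in>Basis - B. y \<bullet> i = 0})"

definition tangent_space :: "'a::euclidean_space set \<Rightarrow> 'a \<Rightarrow> 'a set" where
  "tangent_space M p = {v. \<exists>(\<gamma>::real \<Rightarrow> 'a) e. e > 0 \<and> \<gamma> 0 = p \<and>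
      (\<forall>t\<in>{-e<..<e}. \<gamma> t \<in> M) \<and> (\<gamma> has_vector_derivative v) (at 0)}"

definition smooth_distribution :: "'a::euclidean_space set \<Rightarrow> ('a \<Rightarrow> 'a set) \<Rightarrow> nat \<Rightarrow> bool" where
  "smooth_distribution M D k \<longleftrightarrow>
     (\<forall>p\<in>M. subspace (D p) \<and> dim (D p) = k \<and> D p \<subseteq> tangent_space M p) \<and>
     (\<forall>p\<in>M. \<exists>U (X::nat \<Rightarrow> 'a \<Rightarrow> 'a). open U \<and> p \<in> U \<and> (\<forall>i<k. smooth_on U (X i)) \<and>
        (\<forall>q\<in>M \<inter> U. D q = span {X i q | i. i < k}))"

definition lie_bracket :: "('a::euclidean_space \<Rightarrow> 'a) \<Rightarrow> ('a \<Rightarrow> 'a) \<Rightarrow> 'a \<Rightarrow> 'a" where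
  "lie_bracket X Y = (\<lambda>x. frechet_derivative Y (at x) (X x) - frechet_derivative X (at x) (Y x))"

inductive_set lie_gen :: "'a::euclidean_space set \<Rightarrow> ('a \<Rightarrow> 'a set) \<Rightarrow> 'a set \<Rightarrow> ('a \<Rightarrow> 'a) set"
  for M D U where
  base: "smooth_on U X \<Longrightarrow> (\<forall>q\<in>M \<inter> U. X q \<in> D q) \<Longrightarrow> X \<in> lie_gen M D U"
| bracket: "X \<in> lie_gen M D U \<Longrightarrow> Y \<in> lie_gen M D U \<Longrightarrow> lie_bracket X Y \<in> lie_gen M D U"

definition bracket_generating :: "'a::euclidean_space set \<Rightarrow> ('a \<Rightarrow> 'a set) \<Rightarrow> bool" where
  "bracket_generating M D \<longleftrightarrow>
     (\<forall>p\<in>M. \<exists>U. open U \<and> p \<in> U \<and> span ((\<lambda>X. X p) ` lie_gen M D U) = tangent_space M p)"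

definition neg_definite_on :: "('a \<Rightarrow> 'a \<Rightarrow> real) \<Rightarrow> 'a::real_vector set \<Rightarrow> bool" where
  "neg_definite_on b W \<longleftrightarrow> (\<forall>w\<in>W. w \<noteq> 0 \<longrightarrow> b w w < 0)"

definition sub_lorentzian :: "'a::euclidean_space set \<Rightarrow> ('a \<Rightarrow> 'a set) \<Rightarrow> ('a \<Rightarrow> 'a \<Rightarrow> 'a \<Rightarrow> real) \<Rightarrow> bool" where
  "sub_lorentzian M D g \<longleftrightarrow>
     (\<forall>p\<in>M.
        (\<forall>u\<in>D p. \<forall>v\<in>D p. g p u v = g p v u) \<and>
        (\<forall>u\<in>D p. \<forall>v\<in>D p. \<forall>w\<in>D p. \<forall>c. g p (u + v) w = g p u w + g p v w \<and> g p (c *\<^sub>R u) w = c * g p u w) \<and>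
        (\<forall>u\<in>D p. (\<forall>v\<in>D p. g p u v = 0) \<longrightarrow> u = 0) \<and>
        (\<exists>W. subspace W \<and> W \<subseteq> D p \<and> dim W = 1 \<and> neg_definite_on (g p) W) \<and>
        (\<forall>W. subspace W \<and> W \<subseteq> D p \<and> neg_definite_on (g p) W \<longrightarrow> dim W \<le> 1)) \<and>
     (\<forall>U X Y. open U \<and> smooth_on U X \<and> smooth_on U Y \<and> (\<forall>q\<in>M \<inter> U. X q \<in> D q \<and> Y q \<in> D q)
        \<longrightarrow> smooth_on_set (M \<inter> U) (\<lambda>q. g q (X q) (Y q)))"

definition time_orientation :: "'a::euclidean_space set \<Rightarrow> ('a \<Rightarrow> 'a set) \<Rightarrow> ('a \<Rightarrow> 'a \<Rightarrow> 'a \<Rightarrow> real) \<Rightarrow> ('a \<Rightarrow> 'a) \<Rightarrow> bool" where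
  "time_orientation M D g T \<longleftrightarrow> smooth_on_set M T \<and> (\<forall>p\<in>M. T p \<in> D p \<and> g p (T p) (T p) < 0)"

definition sub_space_time ::
  "'a::euclidean_space set \<Rightarrow> nat \<Rightarrow> ('a \<Rightarrow> 'a set) \<Rightarrow> nat \<Rightarrow> ('a \<Rightarrow> 'a \<Rightarrow> 'a \<Rightarrow> real) \<Rightarrow> ('a \<Rightarrow> 'a) \<Rightarrow> bool" where
  "sub_space_time M m D k g T \<longleftrightarrow>
     M \<noteq> {} \<and> connected M \<and> submanifold M m \<and> 2 \<le> k \<and> k < m \<and>
     smooth_distribution M D k \<and> bracket_generating M D \<and> sub_lorentzian M D g \<and>
     time_orientation M D g T"

definition absolutely_continuous_on :: "real set \<Rightarrow> (real \<Rightarrow> 'a::real_normed_vector) \<Rightarrow> bool" where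
  "absolutely_continuous_on S f \<longleftrightarrow>
     (\<forall>\<epsilon>>0. \<exists>\<delta>>0. \<forall>n (as::nat \<Rightarrow> real) bs.
        (\<forall>i<n. as i \<in> S \<and> bs i \<in> S \<and> as i \<le> bs i \<and> {as i..bs i} \<subseteq> S) \<and>
        (\<forall>i<n. \<forall>j<n. i \<noteq> j \<longrightarrow> {as i<..<bs i} \<inter> {as j<..<bs j} = {}) \<and>
        (\<Sum>i<n. bs i - as i) < \<delta>
        \<longrightarrow> (\<Sum>i<n. norm (f (bs i) - f (as i))) < \<epsilon>)"

text \<open>Horizontal curve on [a,b]: absolutely continuous, in M, velocity in D a.e.,
  velocity square integrable (w.r.t. the Euclidean auxiliary metric).\<close>
definition horizontal_curve :: "'a::euclidean_space set \<Rightarrow> ('a \<Rightarrow> 'a set) \<Rightarrow> (real \<Rightarrow> 'a) \<Rightarrow> real \<Rightarrow> real \<Rightarrow> bool" where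
  "horizontal_curve M D \<gamma> a b \<longleftrightarrow>
     a < b \<and> \<gamma> ` {a..b} \<subseteq> M \<and> absolutely_continuous_on {a..b} \<gamma> \<and>
     (AE t in lebesgue. t \<in> {a..b} \<longrightarrow> \<gamma> differentiable (at t) \<and> vector_derivative \<gamma> (at t) \<in> D (\<gamma> t)) \<and>
     (\<lambda>t. (norm (vector_derivative \<gamma> (at t)))\<^sup>2) integrable_on {a..b}"

definition timelike_fd :: "('a::euclidean_space \<Rightarrow> 'a \<Rightarrow> 'a \<Rightarrow> real) \<Rightarrow> ('a \<Rightarrow> 'a) \<Rightarrow> (real \<Rightarrow> 'a) \<Rightarrow> real \<Rightarrow> real \<Rightarrow> bool" where
  "timelike_fd g T \<gamma> a b \<longleftrightarrow>
     (AE t in lebesgue. t \<in> {a..b} \<longrightarrow>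
        g (\<gamma> t) (vector_derivative \<gamma> (at t)) (vector_derivative \<gamma> (at t)) < 0 \<and>
        g (\<gamma> t) (T (\<gamma> t)) (vector_derivative \<gamma> (at t)) < 0)"

definition chron :: "'a::euclidean_space set \<Rightarrow> ('a \<Rightarrow> 'a set) \<Rightarrow> ('a \<Rightarrow> 'a \<Rightarrow> 'a \<Rightarrow> real) \<Rightarrow> ('a \<Rightarrow> 'a) \<Rightarrow> 'a \<Rightarrow> 'a \<Rightarrow> bool" where
  "chron M D g T p q \<longleftrightarrow>
     (\<exists>\<gamma> a b. horizontal_curve M D \<gamma> a b \<and> timelike_fd g T \<gamma> a b \<and> \<gamma> a = p \<and> \<gamma> b = q)"

definition I_plus where "I_plus M D g T p = {q. chron M D g T p q}"
definition I_minus where "I_minus M D g T p = {q. chron M D g T q p}"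

text \<open>Alexandrov topology on M: generated by the subbasis of all I+(p), I-(p);
  M itself is included so that the underlying space is M (empty intersection).\<close>
definition alexandrov_topology where
  "alexandrov_topology M D g T =
     topology_generated_by (insert M ((\<lambda>p. I_plus M D g T p) ` M \<union> (\<lambda>p. I_minus M D g T p) ` M))"

end

theory Submission
  imports Defs
begin


definition "acP S n (as::nat\<Rightarrow>real) bs \<delta> \<longleftrightarrow>
   (\<forall>i<n. as i \<in> S \<and> bs i \<in> S \<and> as i \<le> bs i \<and> {as i..bs i} \<subseteq> S) \<and>
        (\<forall>i<n. \<forall>j<n. i \<noteq> j \<longrightarrow> {as i<..<bs i} \<inter> {as j<..<bs j} = {}) \<and>
        (\<Sum>i<n. bs i - as i) < \<delta>"

lemma ac_alt: "absolutely_continuous_on S f \<longleftrightarrow>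
  (\<forall>\<epsilon>>0. \<exists>\<delta>>0. \<forall>n as bs. acP S n as bs \<delta> \<longrightarrow> (\<Sum>i<n. norm (f (bs i) - f (as i))) < \<epsilon>)"
  unfolding absolutely_continuous_on_def acP_def by simp

lemma ac_cong:
  assumes eq: "\<And>t. t \<in> S \<Longrightarrow> f t = g t" and ac: "absolutely_continuous_on S f"
  shows "absolutely_continuous_on S g"
  unfolding ac_alt
proof (intro allI impI)
  fix \<epsilon> :: real assume "\<epsilon> > 0"
  then obtain \<delta> where d: "\<delta> > 0" and H: "\<forall>n as bs. acP S n as bs \<delta> \<longrightarrow> (\<Sum>i<n. norm (f (bs i) - f (as i))) < \<epsilon>"
    using ac unfolding ac_alt by blast
  show "\<exists>\<delta>>0. \<forall>n as bs. acP S n as bs \<delta> \<longrightarrow> (\<Sum>i<n. norm (g (bs i) - g (as i))) < \<epsilon>"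
  proof (intro exI[of _ \<delta>] conjI allI impI d)
    fix n and as bs :: "nat \<Rightarrow> real"
    assume P: "acP S n as bs \<delta>"
    have "(\<Sum>i<n. norm (g (bs i) - g (as i))) = (\<Sum>i<n. norm (f (bs i) - f (as i)))"
      using P eq unfolding acP_def by (intro sum.cong) auto
    also have "\<dots> < \<epsilon>" using H P by blast
    finally show "(\<Sum>i<n. norm (g (bs i) - g (as i))) < \<epsilon>" .
  qed
qed

lemma lipschitz_ac:
  assumes "C-lipschitz_on S f"
  shows "absolutely_continuous_on S f"
  unfolding ac_alt
proof (intro allI impI)
  fix \<epsilon> :: real assume e: "\<epsilon> > 0"
  have C: "C \<ge> 0" using assms lipschitz_on_nonneg by blast
  show "\<exists>\<delta>>0. \<forall>n as bs. acP S n as bs \<delta> \<longrightarrow> (\<Sum>i<n. norm (f (bs i) - f (as i))) < \<epsilon>"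
  proof (intro exI[of _ "\<epsilon> / (C + 1)"] conjI allI impI)
    show "\<epsilon> / (C + 1) > 0" using e C by auto
    fix n and as bs :: "nat \<Rightarrow> real"
    assume P: "acP S n as bs (\<epsilon> / (C + 1))"
    have "(\<Sum>i<n. norm (f (bs i) - f (as i))) \<le> (\<Sum>i<n. C * (bs i - as i))"
    proof (intro sum_mono)
      fix i assume "i \<in> {..<n}"
      then have "as i \<in> S" "bs i \<in> S" "as i \<le> bs i" using P unfolding acP_def by auto
      then show "norm (f (bs i) - f (as i)) \<le> C * (bs i - as i)"
        using lipschitz_onD[OF assms, of "bs i" "as i"] by (simp add: dist_norm dist_real_def)
    qed
    also have "\<dots> = C * (\<Sum>i<n. bs i - as i)" by (simp add: sum_distrib_left)
    also have "\<dots> \<le> C * (\<epsilon> / (C + 1))" using P C unfolding acP_def by (intro mult_left_mono) auto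
    also have "\<dots> < \<epsilon>" using e C by (simp add: field_simps)
    finally show "(\<Sum>i<n. norm (f (bs i) - f (as i))) < \<epsilon>" .
  qed
qed

lemma ac_combine:
  fixes f :: "real \<Rightarrow> 'a::real_normed_vector"
  assumes ab: "a \<le> b" and bc: "b \<le> c"
    and ac1: "absolutely_continuous_on {a..b} f" and ac2: "absolutely_continuous_on {b..c} f"
  shows "absolutely_continuous_on {a..c} f"
  unfolding ac_alt
proof (intro allI impI)
  fix \<epsilon> :: real assume e: "\<epsilon> > 0"
  then have e2: "\<epsilon>/2 > 0" by simp
  obtain \<delta>1 where d1: "\<delta>1 > 0" and H1: "\<forall>n as bs. acP {a..b} n as bs \<delta>1 \<longrightarrow> (\<Sum>i<n. norm (f (bs i) - f (as i))) < \<epsilon>/2"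
    using ac1 e2 unfolding ac_alt by blast
  obtain \<delta>2 where d2: "\<delta>2 > 0" and H2: "\<forall>n as bs. acP {b..c} n as bs \<delta>2 \<longrightarrow> (\<Sum>i<n. norm (f (bs i) - f (as i))) < \<epsilon>/2"
    using ac2 e2 unfolding ac_alt by blast
  show "\<exists>\<delta>>0. \<forall>n as bs. acP {a..c} n as bs \<delta> \<longrightarrow> (\<Sum>i<n. norm (f (bs i) - f (as i))) < \<epsilon>"
  proof (intro exI[of _ "min \<delta>1 \<delta>2"] conjI allI impI)
    show "min \<delta>1 \<delta>2 > 0" using d1 d2 by auto
    fix n and as bs :: "nat \<Rightarrow> real"
    assume P: "acP {a..c} n as bs (min \<delta>1 \<delta>2)"
    have P1: "\<And>i. i < n \<Longrightarrow> as i \<in> {a..c} \<and> bs i \<in> {a..c} \<and> as i \<le> bs i"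
      and P2: "\<And>i j. i < n \<Longrightarrow> j < n \<Longrightarrow> i \<noteq> j \<Longrightarrow> {as i<..<bs i} \<inter> {as j<..<bs j} = {}"
      and P3: "(\<Sum>i<n. bs i - as i) < min \<delta>1 \<delta>2"
      using P unfolding acP_def by auto
    define as1 where "as1 i = min (as i) b" for i
    define bs1 where "bs1 i = min (bs i) b" for i
    define as2 where "as2 i = max (as i) b" for i
    define bs2 where "bs2 i = max (bs i) b" for i
    have sub1: "{as1 i<..<bs1 i} \<subseteq> {as i<..<bs i}" for i
      unfolding as1_def bs1_def by auto
    have sub2: "{as2 i<..<bs2 i} \<subseteq> {as i<..<bs i}" for i
      unfolding as2_def bs2_def by auto
    have "(\<Sum>i<n. bs1 i - as1 i) \<le> (\<Sum>i<n. bs i - as i)"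
    proof (intro sum_mono)
      fix i assume "i \<in> {..<n}"
      then have "as i \<le> bs i" using P1 by auto
      then show "bs1 i - as1 i \<le> bs i - as i" unfolding as1_def bs1_def by linarith
    qed
    then have Q3: "(\<Sum>i<n. bs1 i - as1 i) < \<delta>1" using P3 by linarith
    have Q1: "\<forall>i<n. as1 i \<in> {a..b} \<and> bs1 i \<in> {a..b} \<and> as1 i \<le> bs1 i \<and> {as1 i..bs1 i} \<subseteq> {a..b}"
    proof (intro allI impI)
      fix i assume "i < n"
      then have "as i \<in> {a..c}" "bs i \<in> {a..c}" "as i \<le> bs i" using P1 by auto
      then show "as1 i \<in> {a..b} \<and> bs1 i \<in> {a..b} \<and> as1 i \<le> bs1 i \<and> {as1 i..bs1 i} \<subseteq> {a..b}"
        using ab unfolding as1_def bs1_def by auto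
    qed
    have Q2: "\<forall>i<n. \<forall>j<n. i \<noteq> j \<longrightarrow> {as1 i<..<bs1 i} \<inter> {as1 j<..<bs1 j} = {}"
    proof (intro allI impI)
      fix i j assume "i < n" "j < n" "i \<noteq> j"
      then have "{as i<..<bs i} \<inter> {as j<..<bs j} = {}" using P2 by blast
      then show "{as1 i<..<bs1 i} \<inter> {as1 j<..<bs1 j} = {}" using sub1[of i] sub1[of j] by blast
    qed
    have s1: "(\<Sum>i<n. norm (f (bs1 i) - f (as1 i))) < \<epsilon>/2"
      using H1 Q1 Q2 Q3 unfolding acP_def by blast
    have "(\<Sum>i<n. bs2 i - as2 i) \<le> (\<Sum>i<n. bs i - as i)"
    proof (intro sum_mono)
      fix i assume "i \<in> {..<n}"
      then have "as i \<le> bs i" using P1 by auto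
      then show "bs2 i - as2 i \<le> bs i - as i" unfolding as2_def bs2_def by linarith
    qed
    then have R3: "(\<Sum>i<n. bs2 i - as2 i) < \<delta>2" using P3 by linarith
    have R1: "\<forall>i<n. as2 i \<in> {b..c} \<and> bs2 i \<in> {b..c} \<and> as2 i \<le> bs2 i \<and> {as2 i..bs2 i} \<subseteq> {b..c}"
    proof (intro allI impI)
      fix i assume "i < n"
      then have "as i \<in> {a..c}" "bs i \<in> {a..c}" "as i \<le> bs i" using P1 by auto
      then show "as2 i \<in> {b..c} \<and> bs2 i \<in> {b..c} \<and> as2 i \<le> bs2 i \<and> {as2 i..bs2 i} \<subseteq> {b..c}"
        using bc unfolding as2_def bs2_def by auto
    qed
    have R2: "\<forall>i<n. \<forall>j<n. i \<noteq> j \<longrightarrow> {as2 i<..<bs2 i} \<inter> {as2 j<..<bs2 j} = {}"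
    proof (intro allI impI)
      fix i j assume "i < n" "j < n" "i \<noteq> j"
      then have "{as i<..<bs i} \<inter> {as j<..<bs j} = {}" using P2 by blast
      then show "{as2 i<..<bs2 i} \<inter> {as2 j<..<bs2 j} = {}" using sub2[of i] sub2[of j] by blast
    qed
    have s2: "(\<Sum>i<n. norm (f (bs2 i) - f (as2 i))) < \<epsilon>/2"
      using H2 R1 R2 R3 unfolding acP_def by blast
    have "(\<Sum>i<n. norm (f (bs i) - f (as i))) \<le>
       (\<Sum>i<n. norm (f (bs1 i) - f (as1 i)) + norm (f (bs2 i) - f (as2 i)))"
    proof (intro sum_mono)
      fix i assume "i \<in> {..<n}"
      then have le: "as i \<le> bs i" using P1 by auto
      show "norm (f (bs i) - f (as i)) \<le> norm (f (bs1 i) - f (as1 i)) + norm (f (bs2 i) - f (as2 i))"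
      proof (cases "bs i \<le> b")
        case True then show ?thesis using le by (simp add: as1_def bs1_def as2_def bs2_def)
      next
        case False
        show ?thesis
        proof (cases "as i \<ge> b")
          case True then show ?thesis using le by (simp add: as1_def bs1_def as2_def bs2_def)
        next
          case F2: False
          have "f (bs i) - f (as i) = (f b - f (as i)) + (f (bs i) - f b)" by simp
          then have "norm (f (bs i) - f (as i)) \<le> norm (f b - f (as i)) + norm (f (bs i) - f b)"
            by (metis norm_triangle_ineq)
          then show ?thesis using False F2
            by (simp add: as1_def bs1_def as2_def bs2_def)
        qed
      qed
    qed
    also have "\<dots> < \<epsilon>" using s1 s2 by (simp add: sum.distrib)
    finally show "(\<Sum>i<n. norm (f (bs i) - f (as i))) < \<epsilon>" .
  qed
qed



lemma vd_local:
  fixes f g :: "real \<Rightarrow> 'a::real_normed_vector"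
  assumes "open S" "t \<in> S" "\<And>x. x \<in> S \<Longrightarrow> f x = g x"
  shows "vector_derivative f (at t) = vector_derivative g (at t)"
    and "f differentiable (at t) \<longleftrightarrow> g differentiable (at t)"
proof -
  have eq: "(f has_vector_derivative d) (at t) \<longleftrightarrow> (g has_vector_derivative d) (at t)" for d
    using has_vector_derivative_transform_within_open[OF _ assms(1,2), of f d g]
      has_vector_derivative_transform_within_open[OF _ assms(1,2), of g d f] assms(3) by metis
  show "vector_derivative f (at t) = vector_derivative g (at t)"
    unfolding vector_derivative_def using eq by simp
  show "f differentiable (at t) \<longleftrightarrow> g differentiable (at t)"
    using eq vector_derivative_works differentiableI_vector by metis
qed

lemma hvd_shift:
  fixes \<gamma> :: "real \<Rightarrow> 'a::real_normed_vector"
  shows "((\<lambda>t. \<gamma> (t + c)) has_vector_derivative d) (at t) \<longleftrightarrow> (\<gamma> has_vector_derivative d) (at (t + c))"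
proof
  have p: "((\<lambda>s. s + e) has_vector_derivative 1) (at s)" for e s :: real
    by (simp add: has_vector_derivative_add_const)
  assume H: "((\<lambda>t. \<gamma> (t + c)) has_vector_derivative d) (at t)"
  have "(((\<lambda>t. \<gamma> (t + c)) \<circ> (\<lambda>s. s + - c)) has_vector_derivative 1 *\<^sub>R d) (at (t + c))"
    by (rule vector_diff_chain_at[OF p]) (simp add: H)
  then show "(\<gamma> has_vector_derivative d) (at (t + c))" by (simp add: o_def)
next
  have p: "((\<lambda>s. s + e) has_vector_derivative 1) (at s)" for e s :: real
    by (simp add: has_vector_derivative_add_const)
  assume H: "(\<gamma> has_vector_derivative d) (at (t + c))"
  have "((\<gamma> \<circ> (\<lambda>s. s + c)) has_vector_derivative 1 *\<^sub>R d) (at t)"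
    by (rule vector_diff_chain_at[OF p]) (simp add: H)
  then show "((\<lambda>t. \<gamma> (t + c)) has_vector_derivative d) (at t)" by (simp add: o_def)
qed

lemma vd_shift:
  fixes \<gamma> :: "real \<Rightarrow> 'a::real_normed_vector"
  shows "vector_derivative (\<lambda>t. \<gamma> (t + c)) (at t) = vector_derivative \<gamma> (at (t + c))"
    and "(\<lambda>t. \<gamma> (t + c)) differentiable (at t) \<longleftrightarrow> \<gamma> differentiable (at (t + c))"
  using hvd_shift[of \<gamma> c] unfolding vector_derivative_def apply simp
  using hvd_shift[of \<gamma> c] vector_derivative_works differentiableI_vector by metis

lemma AE_shift:
  assumes "AE t in lebesgue. P t"
  shows "AE t in lebesgue. P (t + c)"
proof -
  obtain N where N: "N \<in> null_sets lebesgue" "{x \<in> space lebesgue. \<not> P x} \<subseteq> N"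
    using assms unfolding eventually_ae_filter by blast
  have "negligible N" using N(1) negligible_iff_null_sets by blast
  then have "negligible ((+) (-c) ` N)" by (rule negligible_translation)
  then have N2: "(+) (-c) ` N \<in> null_sets lebesgue" using negligible_iff_null_sets by blast
  have "{x \<in> space lebesgue. \<not> P (x + c)} \<subseteq> (+) (-c) ` N"
  proof
    fix x assume "x \<in> {x \<in> space lebesgue. \<not> P (x + c)}"
    then have "x + c \<in> N" using N(2) by auto
    then show "x \<in> (+) (-c) ` N" by (rule rev_image_eqI) simp
  qed
  then show ?thesis unfolding eventually_ae_filter using N2 by blast
qed

lemma AE_not_point: "AE t in lebesgue. t \<noteq> (b::real)"
proof -
  have "negligible {b}" by simp
  then have "{b} \<in> null_sets lebesgue" using negligible_iff_null_sets by blast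
  then show ?thesis unfolding eventually_ae_filter by (intro bexI[of _ "{b}"]) auto
qed

lemma hc_shift:
  assumes "horizontal_curve M D \<gamma> a b"
  shows "horizontal_curve M D (\<lambda>t. \<gamma> (t + c)) (a - c) (b - c)"
proof -
  have ab: "a < b" and img: "\<gamma> ` {a..b} \<subseteq> M" and ac: "absolutely_continuous_on {a..b} \<gamma>"
    and ae: "AE t in lebesgue. t \<in> {a..b} \<longrightarrow> \<gamma> differentiable (at t) \<and> vector_derivative \<gamma> (at t) \<in> D (\<gamma> t)"
    and int: "(\<lambda>t. (norm (vector_derivative \<gamma> (at t)))\<^sup>2) integrable_on {a..b}"
    using assms unfolding horizontal_curve_def by auto
  have "(\<lambda>t. \<gamma> (t + c)) ` {a - c..b - c} \<subseteq> M"
  proof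
    fix x assume "x \<in> (\<lambda>t. \<gamma> (t + c)) ` {a - c..b - c}"
    then obtain t where "t \<in> {a - c..b - c}" "x = \<gamma> (t + c)" by auto
    then show "x \<in> M" using img by auto
  qed
  moreover have "absolutely_continuous_on {a - c..b - c} (\<lambda>t. \<gamma> (t + c))"
    unfolding ac_alt
  proof (intro allI impI)
    fix \<epsilon> :: real assume "\<epsilon> > 0"
    then obtain \<delta> where d: "\<delta> > 0" and H: "\<forall>n as bs. acP {a..b} n as bs \<delta> \<longrightarrow> (\<Sum>i<n. norm (\<gamma> (bs i) - \<gamma> (as i))) < \<epsilon>"
      using ac unfolding ac_alt by blast
    show "\<exists>\<delta>>0. \<forall>n as bs. acP {a - c..b - c} n as bs \<delta> \<longrightarrow> (\<Sum>i<n. norm (\<gamma> (bs i + c) - \<gamma> (as i + c))) < \<epsilon>"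
    proof (intro exI[of _ \<delta>] conjI allI impI d)
      fix n and as bs :: "nat \<Rightarrow> real"
      assume P: "acP {a - c..b - c} n as bs \<delta>"
      have "acP {a..b} n (\<lambda>i. as i + c) (\<lambda>i. bs i + c) \<delta>"
        unfolding acP_def
      proof (intro conjI allI impI)
        fix i assume "i < n"
        then have "as i \<in> {a - c..b - c}" "bs i \<in> {a - c..b - c}" "as i \<le> bs i" using P unfolding acP_def by auto
        then show "as i + c \<in> {a..b}" "bs i + c \<in> {a..b}" "as i + c \<le> bs i + c" "{as i + c..bs i + c} \<subseteq> {a..b}"
          by auto
      next
        fix i j assume ij: "i < n" "j < n" "i \<noteq> j"
        then have e: "{as i<..<bs i} \<inter> {as j<..<bs j} = {}" using P unfolding acP_def by blast
        show "{as i + c<..<bs i + c} \<inter> {as j + c<..<bs j + c} = {}"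
        proof (rule ccontr)
          assume "{as i + c<..<bs i + c} \<inter> {as j + c<..<bs j + c} \<noteq> {}"
          then obtain x where "x \<in> {as i + c<..<bs i + c}" "x \<in> {as j + c<..<bs j + c}" by blast
          then have "x - c \<in> {as i<..<bs i} \<inter> {as j<..<bs j}" by auto
          then show False using e by blast
        qed
      next
        show "(\<Sum>i<n. bs i + c - (as i + c)) < \<delta>" using P unfolding acP_def by simp
      qed
      then show "(\<Sum>i<n. norm (\<gamma> (bs i + c) - \<gamma> (as i + c))) < \<epsilon>" using H by blast
    qed
  qed
  moreover have "AE t in lebesgue. t \<in> {a - c..b - c} \<longrightarrow> (\<lambda>t. \<gamma> (t + c)) differentiable (at t) \<and>
       vector_derivative (\<lambda>t. \<gamma> (t + c)) (at t) \<in> D (\<gamma> (t + c))"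
    using AE_shift[OF ae, of c] by eventually_elim (auto simp: vd_shift)
  moreover have "(\<lambda>t. (norm (vector_derivative (\<lambda>t. \<gamma> (t + c)) (at t)))\<^sup>2) integrable_on {a - c..b - c}"
  proof -
    have "(\<lambda>x. (norm (vector_derivative \<gamma> (at (1 *\<^sub>R x + c))))\<^sup>2) integrable_on ((\<lambda>x. (1 / 1) *\<^sub>R x - ((1 / 1) *\<^sub>R c)) ` cbox a b)"
      by (rule integrable_on_affinity) (use int in auto)
    moreover have "(\<lambda>x. (1 / 1) *\<^sub>R x - ((1 / 1) *\<^sub>R c)) ` cbox a b = {a - c..b - c}"
      by (simp add: image_diff_atLeastAtMost)
    ultimately show ?thesis by (simp add: vd_shift)
  qed
  ultimately show ?thesis unfolding horizontal_curve_def using ab by auto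
qed

lemma tl_shift:
  assumes "timelike_fd g T \<gamma> a b"
  shows "timelike_fd g T (\<lambda>t. \<gamma> (t + c)) (a - c) (b - c)"
  using AE_shift[OF assms[unfolded timelike_fd_def], of c] unfolding timelike_fd_def
  by eventually_elim (auto simp: vd_shift)



lemma concat_local:
  fixes \<gamma>1 \<gamma>2 :: "real \<Rightarrow> 'a::real_normed_vector" and b t :: real
  assumes \<gamma>_def: "\<gamma> = (\<lambda>t. if t \<le> b then \<gamma>1 t else \<gamma>2 t)"
  shows "t < b \<Longrightarrow> vector_derivative \<gamma> (at t) = vector_derivative \<gamma>1 (at t) \<and>
            (\<gamma> differentiable (at t) \<longleftrightarrow> \<gamma>1 differentiable (at t)) \<and> \<gamma> t = \<gamma>1 t"
    and "t > b \<Longrightarrow> vector_derivative \<gamma> (at t) = vector_derivative \<gamma>2 (at t) \<and>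
            (\<gamma> differentiable (at t) \<longleftrightarrow> \<gamma>2 differentiable (at t)) \<and> \<gamma> t = \<gamma>2 t"
proof -
  assume "t < b"
  then show "vector_derivative \<gamma> (at t) = vector_derivative \<gamma>1 (at t) \<and>
            (\<gamma> differentiable (at t) \<longleftrightarrow> \<gamma>1 differentiable (at t)) \<and> \<gamma> t = \<gamma>1 t"
    using vd_local[of "{..<b}" t \<gamma> \<gamma>1] unfolding \<gamma>_def by auto
next
  assume "t > b"
  then show "vector_derivative \<gamma> (at t) = vector_derivative \<gamma>2 (at t) \<and>
            (\<gamma> differentiable (at t) \<longleftrightarrow> \<gamma>2 differentiable (at t)) \<and> \<gamma> t = \<gamma>2 t"
    using vd_local[of "{b<..}" t \<gamma> \<gamma>2] unfolding \<gamma>_def by auto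
qed

lemma hc_concat:
  assumes h1: "horizontal_curve M D \<gamma>1 a b" and h2: "horizontal_curve M D \<gamma>2 b c"
    and eq: "\<gamma>1 b = \<gamma>2 b"
  shows "horizontal_curve M D (\<lambda>t. if t \<le> b then \<gamma>1 t else \<gamma>2 t) a c"
proof -
  define \<gamma> where "\<gamma> = (\<lambda>t. if t \<le> b then \<gamma>1 t else \<gamma>2 t)"
  note L = concat_local[OF \<gamma>_def]
  have ab: "a < b" and img1: "\<gamma>1 ` {a..b} \<subseteq> M" and ac1: "absolutely_continuous_on {a..b} \<gamma>1"
    and ae1: "AE t in lebesgue. t \<in> {a..b} \<longrightarrow> \<gamma>1 differentiable (at t) \<and> vector_derivative \<gamma>1 (at t) \<in> D (\<gamma>1 t)"
    and int1: "(\<lambda>t. (norm (vector_derivative \<gamma>1 (at t)))\<^sup>2) integrable_on {a..b}"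
    using h1 unfolding horizontal_curve_def by auto
  have bc: "b < c" and img2: "\<gamma>2 ` {b..c} \<subseteq> M" and ac2: "absolutely_continuous_on {b..c} \<gamma>2"
    and ae2: "AE t in lebesgue. t \<in> {b..c} \<longrightarrow> \<gamma>2 differentiable (at t) \<and> vector_derivative \<gamma>2 (at t) \<in> D (\<gamma>2 t)"
    and int2: "(\<lambda>t. (norm (vector_derivative \<gamma>2 (at t)))\<^sup>2) integrable_on {b..c}"
    using h2 unfolding horizontal_curve_def by auto
  have "\<gamma> ` {a..c} \<subseteq> M"
  proof
    fix x assume "x \<in> \<gamma> ` {a..c}"
    then obtain t where t: "t \<in> {a..c}" "x = \<gamma> t" by auto
    show "x \<in> M"
    proof (cases "t \<le> b")
      case True then show ?thesis using t img1 unfolding \<gamma>_def by auto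
    next
      case False then show ?thesis using t img2 unfolding \<gamma>_def by auto
    qed
  qed
  moreover have "absolutely_continuous_on {a..c} \<gamma>"
  proof (rule ac_combine)
    show "absolutely_continuous_on {a..b} \<gamma>"
      by (rule ac_cong[OF _ ac1]) (auto simp: \<gamma>_def)
    show "absolutely_continuous_on {b..c} \<gamma>"
      by (rule ac_cong[OF _ ac2]) (auto simp: \<gamma>_def eq)
  qed (use ab bc in auto)
  moreover have "AE t in lebesgue. t \<in> {a..c} \<longrightarrow> \<gamma> differentiable (at t) \<and> vector_derivative \<gamma> (at t) \<in> D (\<gamma> t)"
    using ae1 ae2 AE_not_point[of b]
  proof eventually_elim
    case (elim t)
    show ?case
    proof
      assume t: "t \<in> {a..c}"
      show "\<gamma> differentiable (at t) \<and> vector_derivative \<gamma> (at t) \<in> D (\<gamma> t)"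
      proof (cases "t < b")
        case True
        have "\<gamma> t = \<gamma>1 t" using True unfolding \<gamma>_def by simp
        then show ?thesis using L(1)[OF True] elim t True by auto
      next
        case False then have "t > b" using elim by auto
        moreover have "\<gamma> t = \<gamma>2 t" using \<open>t > b\<close> unfolding \<gamma>_def by simp
        ultimately show ?thesis using L(2)[OF \<open>t > b\<close>] elim t by auto
      qed
    qed
  qed
  moreover have "(\<lambda>t. (norm (vector_derivative \<gamma> (at t)))\<^sup>2) integrable_on {a..c}"
  proof (rule Henstock_Kurzweil_Integration.integrable_combine)
    show "(\<lambda>t. (norm (vector_derivative \<gamma> (at t)))\<^sup>2) integrable_on {a..b}"
      by (rule integrable_spike_finite[of "{b}", OF _ _ int1]) (use L(1) in auto)
    show "(\<lambda>t. (norm (vector_derivative \<gamma> (at t)))\<^sup>2) integrable_on {b..c}"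
      by (rule integrable_spike_finite[of "{b}", OF _ _ int2]) (use L(2) in auto)
  qed (use ab bc in auto)
  ultimately show ?thesis unfolding horizontal_curve_def \<gamma>_def[symmetric] using ab bc by auto
qed

lemma tl_concat:
  assumes h1: "timelike_fd g T \<gamma>1 a b" and h2: "timelike_fd g T \<gamma>2 b c"
  shows "timelike_fd g T (\<lambda>t. if t \<le> b then \<gamma>1 t else \<gamma>2 t) a c"
proof -
  define \<gamma> where "\<gamma> = (\<lambda>t. if t \<le> b then \<gamma>1 t else \<gamma>2 t)"
  note L = concat_local[OF \<gamma>_def]
  have "AE t in lebesgue. t \<in> {a..c} \<longrightarrow>
        g (\<gamma> t) (vector_derivative \<gamma> (at t)) (vector_derivative \<gamma> (at t)) < 0 \<and>
        g (\<gamma> t) (T (\<gamma> t)) (vector_derivative \<gamma> (at t)) < 0"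
    using h1[unfolded timelike_fd_def] h2[unfolded timelike_fd_def] AE_not_point[of b]
  proof eventually_elim
    case (elim t)
    show ?case
    proof
      assume t: "t \<in> {a..c}"
      show "g (\<gamma> t) (vector_derivative \<gamma> (at t)) (vector_derivative \<gamma> (at t)) < 0 \<and>
        g (\<gamma> t) (T (\<gamma> t)) (vector_derivative \<gamma> (at t)) < 0"
      proof (cases "t < b")
        case True
        have "\<gamma> t = \<gamma>1 t" using True unfolding \<gamma>_def by simp
        then show ?thesis using L(1)[OF True] elim t True by auto
      next
        case False then have "t > b" using elim by auto
        moreover have "\<gamma> t = \<gamma>2 t" using \<open>t > b\<close> unfolding \<gamma>_def by simp
        ultimately show ?thesis using L(2)[OF \<open>t > b\<close>] elim t by auto
      qed
    qed
  qed
  then show ?thesis unfolding timelike_fd_def \<gamma>_def .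
qed

lemma chron_trans:
  assumes "chron M D g T p q" "chron M D g T q r"
  shows "chron M D g T p r"
proof -
  obtain \<gamma>1 a1 b1 where g1: "horizontal_curve M D \<gamma>1 a1 b1" "timelike_fd g T \<gamma>1 a1 b1" "\<gamma>1 a1 = p" "\<gamma>1 b1 = q"
    using assms(1) unfolding chron_def by blast
  obtain \<gamma>2 a2 b2 where g2: "horizontal_curve M D \<gamma>2 a2 b2" "timelike_fd g T \<gamma>2 a2 b2" "\<gamma>2 a2 = q" "\<gamma>2 b2 = r"
    using assms(2) unfolding chron_def by blast
  define c where "c = a2 - b1"
  define \<delta> where "\<delta> = (\<lambda>t. \<gamma>2 (t + c))"
  have e1: "a2 - c = b1" unfolding c_def by simp
  have h3: "horizontal_curve M D \<delta> b1 (b2 - c)"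
    using hc_shift[OF g2(1), of c] unfolding \<delta>_def e1 .
  have t3: "timelike_fd g T \<delta> b1 (b2 - c)"
    using tl_shift[OF g2(2), of c] unfolding \<delta>_def e1 .
  have d1: "\<delta> b1 = q" unfolding \<delta>_def c_def using g2(3) by simp
  have d2: "\<delta> (b2 - c) = r" unfolding \<delta>_def using g2(4) by simp
  have lt: "a1 < b1" "b1 < b2 - c" using g1(1) h3 unfolding horizontal_curve_def by auto
  have "horizontal_curve M D (\<lambda>t. if t \<le> b1 then \<gamma>1 t else \<delta> t) a1 (b2 - c)"
    by (rule hc_concat[OF g1(1) h3]) (simp add: g1(4) d1)
  moreover have "timelike_fd g T (\<lambda>t. if t \<le> b1 then \<gamma>1 t else \<delta> t) a1 (b2 - c)"
    by (rule tl_concat[OF g1(2) t3])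
  ultimately show ?thesis unfolding chron_def
    using lt g1(3) d2 by (intro exI[of _ "\<lambda>t. if t \<le> b1 then \<gamma>1 t else \<delta> t"] exI[of _ a1] exI[of _ "b2 - c"]) auto
qed



lemma chron_in_M: "chron M D g T p q \<Longrightarrow> p \<in> M \<and> q \<in> M"
  unfolding chron_def horizontal_curve_def by force



lemma picard:
  fixes G :: "'a::euclidean_space \<Rightarrow> 'a" and y0 :: 'a
  assumes lip: "C-lipschitz_on UNIV G" and bnd: "\<And>y. norm (G y) \<le> Mb"
    and tau: "\<tau> > 0" "C * \<tau> < 1"
  shows "\<exists>y. continuous_on {0..\<tau>} y \<and> (\<forall>t\<in>{0..\<tau>}. y t = y0 + integral {0..t} (\<lambda>s. G (y s)))"
proof -
  have C0: "C \<ge> 0" using lip lipschitz_on_nonneg by blast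
  have contG: "continuous_on UNIV G" using lip lipschitz_on_continuous_on by blast
  define F where "F f t = y0 + integral {0..t} (\<lambda>s. G (apply_bcontfun f s))" for f :: "real \<Rightarrow>\<^sub>C 'a" and t
  have cG: "continuous_on S (\<lambda>s. G (apply_bcontfun f s))" for f :: "real \<Rightarrow>\<^sub>C 'a" and S
    by (rule continuous_on_compose2[OF contG continuous_on_apply_bcontfun]) auto
  have Fc: "continuous_on {0..\<tau>} (F f)" for f
  proof -
    have "(\<lambda>s. G (apply_bcontfun f s)) integrable_on {0..\<tau>}"
      by (rule integrable_continuous_interval[OF cG])
    then have "continuous_on {0..\<tau>} (\<lambda>t. integral {0..t} (\<lambda>s. G (apply_bcontfun f s)))"
      by (rule indefinite_integral_continuous_1)
    then show ?thesis unfolding F_def by (intro continuous_intros)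
  qed
  have ex: "\<exists>h::real\<Rightarrow>\<^sub>C 'a. \<forall>t. apply_bcontfun h t = F f (clamp 0 \<tau> t)" for f
  proof -
    have "continuous_on (cbox 0 \<tau>) (F f)" using Fc by (simp add: cbox_interval)
    then obtain h :: "real \<Rightarrow>\<^sub>C 'a" where "\<And>x. x \<in> cbox 0 \<tau> \<Longrightarrow> h x = F f x" "\<And>x. h x = F f (clamp 0 \<tau> x)"
      by (rule continuous_on_cbox_bcontfunE) blast
    then show ?thesis by blast
  qed
  define \<Phi> where "\<Phi> f = (SOME h::real\<Rightarrow>\<^sub>C 'a. \<forall>t. apply_bcontfun h t = F f (clamp 0 \<tau> t))" for f
  have \<Phi>: "apply_bcontfun (\<Phi> f) t = F f (clamp 0 \<tau> t)" for f t
    unfolding \<Phi>_def using someI_ex[OF ex[of f]] by blast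
  have clin: "clamp 0 \<tau> t \<in> {0..\<tau>}" for t :: real
    using clamp_in_interval[of 0 \<tau> t] tau by (auto simp: cbox_interval)
  have contr: "dist (\<Phi> f) (\<Phi> g) \<le> (C * \<tau>) * dist f g" for f g
  proof (rule dist_bound)
    fix t
    define s where "s = clamp 0 \<tau> t"
    have s: "0 \<le> s" "s \<le> \<tau>" using clin[of t] unfolding s_def by auto
    have i1: "(\<lambda>u. G (apply_bcontfun f u)) integrable_on {0..s}"
      by (rule integrable_continuous_interval[OF cG])
    have i2: "(\<lambda>u. G (apply_bcontfun g u)) integrable_on {0..s}"
      by (rule integrable_continuous_interval[OF cG])
    have "dist (\<Phi> f t) (\<Phi> g t) = norm (integral {0..s} (\<lambda>u. G (apply_bcontfun f u)) - integral {0..s} (\<lambda>u. G (apply_bcontfun g u)))"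
      unfolding \<Phi> F_def s_def[symmetric] dist_norm by simp
    also have "\<dots> = norm (integral {0..s} (\<lambda>u. G (apply_bcontfun f u) - G (apply_bcontfun g u)))"
      using integral_diff[OF i1 i2] by simp
    also have "\<dots> \<le> (C * dist f g) * (s - 0)"
    proof (rule integral_bound)
      show "continuous_on {0..s} (\<lambda>u. G (apply_bcontfun f u) - G (apply_bcontfun g u))"
        by (intro continuous_intros cG)
      fix u assume "u \<in> {0..s}"
      have "norm (G (apply_bcontfun f u) - G (apply_bcontfun g u)) \<le> C * dist (apply_bcontfun f u) (apply_bcontfun g u)"
        using lipschitz_onD[OF lip, of "apply_bcontfun f u" "apply_bcontfun g u"] by (simp add: dist_norm)
      also have "\<dots> \<le> C * dist f g" using C0 dist_bounded by (intro mult_left_mono) auto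
      finally show "norm (G (apply_bcontfun f u) - G (apply_bcontfun g u)) \<le> C * dist f g" .
    qed (use s in auto)
    also have "\<dots> \<le> (C * dist f g) * \<tau>" using s C0 by (intro mult_left_mono) auto
    finally show "dist (\<Phi> f t) (\<Phi> g t) \<le> (C * \<tau>) * dist f g" by (simp add: algebra_simps)
  qed
  have "\<exists>!x\<in>UNIV. \<Phi> x = x"
    by (rule Banach_fix[OF complete_UNIV UNIV_not_empty, of "C * \<tau>" \<Phi>]) (use C0 tau contr in auto)
  then obtain x where x: "\<Phi> x = x" by blast
  show ?thesis
  proof (intro exI[of _ "apply_bcontfun x"] conjI ballI)
    show "continuous_on {0..\<tau>} (apply_bcontfun x)" by simp
    fix t assume t: "t \<in> {0..\<tau>}"
    have "apply_bcontfun x t = apply_bcontfun (\<Phi> x) t" using x by simp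
    also have "\<dots> = F x t" unfolding \<Phi> using t by (simp add: cbox_interval)
    finally show "apply_bcontfun x t = y0 + integral {0..t} (\<lambda>s. G (apply_bcontfun x s))"
      unfolding F_def .
  qed
qed



lemma dd_append: "dd ws (dd vs f) = dd (ws @ vs) f"
  by (induction ws) auto

lemma smooth_dd: "smooth_on U f \<Longrightarrow> smooth_on U (dd vs f)"
  unfolding smooth_on_def by (simp add: dd_append)

lemma smooth_diff: "smooth_on U f \<Longrightarrow> x \<in> U \<Longrightarrow> f differentiable (at x)"
  unfolding smooth_on_def by (metis dd.simps(1))

lemma smooth_cont: "smooth_on U f \<Longrightarrow> open U \<Longrightarrow> continuous_on U f"
  by (meson continuous_at_imp_continuous_on differentiable_imp_continuous_within smooth_diff)

lemma dd_single: "dd [v] f x = frechet_derivative f (at x) v"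
  by simp

lemma smooth_deriv:
  "smooth_on U f \<Longrightarrow> x \<in> U \<Longrightarrow> (f has_derivative frechet_derivative f (at x)) (at x)"
  using smooth_diff frechet_derivative_works by blast

lemma linear_basis_expand:
  fixes L :: "'a::euclidean_space \<Rightarrow> 'b::real_vector"
  assumes "linear L"
  shows "L v = (\<Sum>i\<in>Basis. (v \<bullet> i) *\<^sub>R L i)"
proof -
  have "L v = L (\<Sum>i\<in>Basis. (v \<bullet> i) *\<^sub>R i)" by (simp add: euclidean_representation)
  also have "\<dots> = (\<Sum>i\<in>Basis. (v \<bullet> i) *\<^sub>R L i)"
    using assms by (simp add: linear_sum linear_scale o_def)
  finally show ?thesis .
qed

lemma compact_bound:
  fixes f :: "'a::metric_space \<Rightarrow> 'b::real_normed_vector"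
  assumes "compact K" "continuous_on K f"
  shows "\<exists>B. \<forall>x\<in>K. norm (f x) \<le> B"
proof -
  have "bounded (f ` K)" using compact_continuous_image[OF assms(2,1)] compact_imp_bounded by blast
  then show ?thesis unfolding bounded_iff by blast
qed

lemma smooth_lipschitz:
  fixes f :: "'a::euclidean_space \<Rightarrow> 'b::euclidean_space"
  assumes sm: "smooth_on U f" and op: "open U" and K: "compact K" "convex K" "K \<subseteq> U"
  shows "\<exists>C. C-lipschitz_on K f"
proof -
  have "\<forall>i\<in>Basis. \<exists>b. \<forall>x\<in>K. norm (dd [i] f x) \<le> b"
  proof
    fix i :: 'a assume "i \<in> Basis"
    have "continuous_on U (dd [i] f)" by (rule smooth_cont[OF smooth_dd[OF sm] op])
    then have "continuous_on K (dd [i] f)" using K(3) continuous_on_subset by blast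
    then show "\<exists>b. \<forall>x\<in>K. norm (dd [i] f x) \<le> b" using compact_bound[OF K(1)] by blast
  qed
  then obtain B where B: "\<And>i x. i \<in> Basis \<Longrightarrow> x \<in> K \<Longrightarrow> norm (dd [i] f x) \<le> B i" by metis
  define C where "C = (\<Sum>i\<in>Basis. \<bar>B i\<bar>)"
  have C0: "C \<ge> 0" unfolding C_def by (simp add: sum_nonneg)
  show ?thesis
  proof (intro exI[of _ C] bounded_derivative_imp_lipschitz[OF _ K(2) _ C0])
    fix x assume x: "x \<in> K"
    then have "x \<in> U" using K by auto
    then show "(f has_derivative frechet_derivative f (at x)) (at x within K)"
      using smooth_deriv[OF sm] has_derivative_at_withinI by blast
    have lin: "linear (frechet_derivative f (at x))"
      using smooth_deriv[OF sm \<open>x \<in> U\<close>] has_derivative_linear by blast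
    show "onorm (frechet_derivative f (at x)) \<le> C"
    proof (rule onorm_le)
      fix v :: 'a
      have "norm (frechet_derivative f (at x) v) = norm (\<Sum>i\<in>Basis. (v \<bullet> i) *\<^sub>R frechet_derivative f (at x) i)"
        using linear_basis_expand[OF lin] by metis
      also have "\<dots> \<le> (\<Sum>i\<in>Basis. norm ((v \<bullet> i) *\<^sub>R frechet_derivative f (at x) i))"
        by (rule norm_sum)
      also have "\<dots> \<le> (\<Sum>i\<in>Basis. norm v * \<bar>B i\<bar>)"
      proof (rule sum_mono)
        fix i :: 'a assume i: "i \<in> Basis"
        have "norm ((v \<bullet> i) *\<^sub>R frechet_derivative f (at x) i) = \<bar>v \<bullet> i\<bar> * norm (frechet_derivative f (at x) i)"
          by simp
        also have "\<dots> \<le> norm v * \<bar>B i\<bar>"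
          using B[OF i x] Basis_le_norm[OF i, of v]
          by (intro mult_mono) auto
        finally show "norm ((v \<bullet> i) *\<^sub>R frechet_derivative f (at x) i) \<le> norm v * \<bar>B i\<bar>" .
      qed
      also have "\<dots> = C * norm v" unfolding C_def by (simp add: sum_distrib_left mult.commute)
      finally show "norm (frechet_derivative f (at x) v) \<le> C * norm v" .
    qed
  qed
qed

lemma lipschitz_bound:
  fixes f :: "'a::metric_space \<Rightarrow> 'b::real_normed_vector"
  assumes "compact K" "C-lipschitz_on K f"
  shows "\<exists>B. \<forall>x\<in>K. norm (f x) \<le> B"
  using compact_bound[OF assms(1) lipschitz_on_continuous_on[OF assms(2)]] .

lemma lipschitz_scaleR:
  fixes a :: "'a::metric_space \<Rightarrow> real" and b :: "'a \<Rightarrow> 'b::real_normed_vector"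
  assumes a: "Ca-lipschitz_on K a" and b: "Cb-lipschitz_on K b"
    and A: "\<And>x. x \<in> K \<Longrightarrow> \<bar>a x\<bar> \<le> A" and Bb: "\<And>x. x \<in> K \<Longrightarrow> norm (b x) \<le> Bb"
    and A0: "A \<ge> 0" and B0: "Bb \<ge> 0"
  shows "(A * Cb + Bb * Ca)-lipschitz_on K (\<lambda>x. a x *\<^sub>R b x)"
proof (rule lipschitz_onI)
  have "Ca \<ge> 0" "Cb \<ge> 0" using a b lipschitz_on_nonneg by blast+
  then show "0 \<le> A * Cb + Bb * Ca" using A0 B0 by simp
  fix x y assume xy: "x \<in> K" "y \<in> K"
  have "a x *\<^sub>R b x - a y *\<^sub>R b y = a x *\<^sub>R (b x - b y) + (a x - a y) *\<^sub>R b y"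
    by (simp add: algebra_simps)
  then have "dist (a x *\<^sub>R b x) (a y *\<^sub>R b y) \<le> norm (a x *\<^sub>R (b x - b y)) + norm ((a x - a y) *\<^sub>R b y)"
    by (metis dist_norm norm_triangle_ineq)
  also have "\<dots> = \<bar>a x\<bar> * norm (b x - b y) + \<bar>a x - a y\<bar> * norm (b y)" by simp
  also have "\<dots> \<le> A * (Cb * dist x y) + (Ca * dist x y) * Bb"
  proof (intro add_mono mult_mono)
    show "\<bar>a x\<bar> \<le> A" using A xy by auto
    show "norm (b x - b y) \<le> Cb * dist x y" using lipschitz_onD[OF b xy] by (simp add: dist_norm)
    show "\<bar>a x - a y\<bar> \<le> Ca * dist x y" using lipschitz_onD[OF a xy] by (simp add: dist_real_def)
    show "norm (b y) \<le> Bb" using Bb xy by auto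
  qed (use A0 \<open>Ca \<ge> 0\<close> in auto)
  finally show "dist (a x *\<^sub>R b x) (a y *\<^sub>R b y) \<le> (A * Cb + Bb * Ca) * dist x y"
    by (simp add: algebra_simps)
qed

lemma lipschitz_sum_ex:
  fixes f :: "'i \<Rightarrow> 'a::metric_space \<Rightarrow> 'b::real_normed_vector"
  assumes "finite I" "\<And>i. i \<in> I \<Longrightarrow> \<exists>C. C-lipschitz_on K (f i)"
  shows "\<exists>C. C-lipschitz_on K (\<lambda>x. \<Sum>i\<in>I. f i x)"
  using assms
proof (induction I rule: finite_induct)
  case empty
  then show ?case using lipschitz_on_constant by auto
next
  case (insert j I)
  then obtain C1 where "C1-lipschitz_on K (\<lambda>x. \<Sum>i\<in>I. f i x)" by blast
  moreover obtain C2 where "C2-lipschitz_on K (f j)" using insert by blast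
  ultimately have "(C2 + C1)-lipschitz_on K (\<lambda>x. f j x + (\<Sum>i\<in>I. f i x))"
    by (intro lipschitz_on_add)
  then show ?case using insert by auto
qed

lemma lipschitz_inner:
  "norm (i::'a::euclidean_space) = 1 \<Longrightarrow> 1-lipschitz_on S (\<lambda>v. v \<bullet> i)"
proof (rule lipschitz_onI)
  fix x y assume "norm i = 1"
  then have "\<bar>(x - y) \<bullet> i\<bar> \<le> norm (x - y)" using Cauchy_Schwarz_ineq2[of "x - y" i] by simp
  then show "dist (x \<bullet> i) (y \<bullet> i) \<le> 1 * dist x y" by (simp add: dist_real_def dist_norm inner_diff_left)
qed simp



lemma deriv_in_slice:
  fixes \<phi> :: "'a::euclidean_space \<Rightarrow> 'a"
  assumes U: "open U" "x \<in> M" "x \<in> U" and d\<phi>: "\<phi> differentiable (at x)"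
    and slice: "\<And>z. z \<in> M \<inter> U \<Longrightarrow> \<forall>i\<in>Basis - B. \<phi> z \<bullet> i = 0"
    and v: "v \<in> tangent_space M x"
    and i: "i \<in> Basis - B"
  shows "frechet_derivative \<phi> (at x) v \<bullet> i = 0"
proof -
  obtain c e where ce: "e > 0" "c 0 = x" "\<And>t. t \<in> {-e<..<e} \<Longrightarrow> c t \<in> M"
    "(c has_vector_derivative v) (at 0)"
    using v unfolding tangent_space_def by blast
  define \<phi>' where "\<phi>' = frechet_derivative \<phi> (at x)"
  have h\<phi>: "(\<phi> has_derivative \<phi>') (at x)" using d\<phi> frechet_derivative_works unfolding \<phi>'_def by blast
  have hc: "(c has_derivative (\<lambda>h. h *\<^sub>R v)) (at 0)" using ce(4) unfolding has_vector_derivative_def .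
  have "((\<phi> \<circ> c) has_derivative (\<phi>' \<circ> (\<lambda>h. h *\<^sub>R v))) (at 0)"
    by (rule diff_chain_at[OF hc]) (simp add: ce(2) h\<phi>)
  then have D1: "((\<lambda>t. \<phi> (c t) \<bullet> i) has_derivative (\<lambda>h. \<phi>' (h *\<^sub>R v) \<bullet> i)) (at 0)"
    using bounded_linear.has_derivative[OF bounded_linear_inner_left] by (simp add: o_def)
  obtain r where r: "r > 0" "ball x r \<subseteq> U" using U openE by blast
  have "continuous (at 0) c" using has_vector_derivative_continuous[OF ce(4)] .
  then obtain d where d: "d > 0" "\<And>t. dist t 0 < d \<Longrightarrow> dist (c t) (c 0) < r"
    unfolding continuous_at_eps_delta using r(1) by blast
  define S where "S = ball (0::real) (min d e)"
  have S0: "open S" "0 \<in> S" unfolding S_def using d ce by auto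
  have Seq: "\<phi> (c t) \<bullet> i = 0" if "t \<in> S" for t
  proof -
    have "dist t 0 < d" "t \<in> {-e<..<e}" using that unfolding S_def by (auto simp: dist_real_def)
    then have "c t \<in> M" using ce(3) by blast
    have "dist (c t) x < r" using d(2)[OF \<open>dist t 0 < d\<close>] ce(2) by simp
    then have "c t \<in> U" using r(2) by (auto simp: dist_commute)
    then show ?thesis using slice i \<open>c t \<in> M\<close> by blast
  qed
  have D2: "((\<lambda>t::real. 0::real) has_derivative (\<lambda>h. \<phi>' (h *\<^sub>R v) \<bullet> i)) (at 0)"
    by (rule has_derivative_transform_within_open[OF D1 S0]) (use Seq in auto)
  have D3: "((\<lambda>t::real. 0::real) has_derivative (\<lambda>h. 0)) (at 0)" by simp
  have "(\<lambda>h. \<phi>' (h *\<^sub>R v) \<bullet> i) = (\<lambda>h. 0)" using has_derivative_unique[OF D2 D3] .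
  then have "\<phi>' (1 *\<^sub>R v) \<bullet> i = 0" by metis
  then show ?thesis unfolding \<phi>'_def by simp
qed

lemma chain_id:
  fixes \<phi> \<psi> :: "'a::euclidean_space \<Rightarrow> 'a"
  assumes "open U" "x \<in> U" "\<And>z. z \<in> U \<Longrightarrow> \<psi> (\<phi> z) = z"
    and "\<phi> differentiable (at x)" "\<psi> differentiable (at (\<phi> x))"
  shows "frechet_derivative \<psi> (at (\<phi> x)) (frechet_derivative \<phi> (at x) v) = v"
proof -
  have h1: "(\<phi> has_derivative frechet_derivative \<phi> (at x)) (at x)" using assms(4) frechet_derivative_works by blast
  have h2: "(\<psi> has_derivative frechet_derivative \<psi> (at (\<phi> x))) (at (\<phi> x))" using assms(5) frechet_derivative_works by blast
  have D1: "((\<psi> \<circ> \<phi>) has_derivative (frechet_derivative \<psi> (at (\<phi> x)) \<circ> frechet_derivative \<phi> (at x))) (at x)"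
    by (rule diff_chain_at[OF h1 h2])
  have D2: "((\<psi> \<circ> \<phi>) has_derivative (\<lambda>h. h)) (at x)"
    by (rule has_derivative_transform_within_open[OF has_derivative_ident assms(1,2)]) (use assms(3) in auto)
  have "(frechet_derivative \<psi> (at (\<phi> x)) \<circ> frechet_derivative \<phi> (at x)) = (\<lambda>h. h)"
    using has_derivative_unique[OF D1 D2] .
  then show ?thesis by (metis comp_apply)
qed



lemma exists_future':
  fixes M :: "'a::euclidean_space set"
  assumes sst: "sub_space_time M m D k g T" and q: "q \<in> M"
  shows "\<exists>p\<in>M. chron M D g T q p"
proof -
  have sub: "submanifold M m" and to: "time_orientation M D g T" and sd: "smooth_distribution M D k"
    using sst unfolding sub_space_time_def by auto
  have "\<exists>U V (\<phi>::'a \<Rightarrow> 'a) \<psi> B.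
        open U \<and> open V \<and> q \<in> U \<and> smooth_on U \<phi> \<and> smooth_on V \<psi> \<and>
        \<phi> ` U = V \<and> (\<forall>x\<in>U. \<psi> (\<phi> x) = x) \<and>
        B \<subseteq> Basis \<and> card B = m \<and>
        \<phi> ` (M \<inter> U) = V \<inter> {y. \<forall>i\<in>Basis - B. y \<bullet> i = 0}"
    using sub q unfolding submanifold_def by blast
  then obtain U V and \<phi> \<psi> :: "'a \<Rightarrow> 'a" and B where ch0: "open U" "open V" "q \<in> U" "smooth_on U \<phi>" "smooth_on V \<psi>"
     "\<phi> ` U = V" "\<forall>x\<in>U. \<psi> (\<phi> x) = x" "\<phi> ` (M \<inter> U) = V \<inter> {y. \<forall>i\<in>Basis - B. y \<bullet> i = 0}"
    by blast
  have ch: "open U" "open V" "q \<in> U" "smooth_on U \<phi>" "smooth_on V \<psi>"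
     "\<phi> ` U = V" "\<And>x. x \<in> U \<Longrightarrow> \<psi> (\<phi> x) = x" "\<phi> ` (M \<inter> U) = V \<inter> {y. \<forall>i\<in>Basis - B. y \<bullet> i = 0}"
    using ch0 by auto
  have "\<exists>U' h. open U' \<and> q \<in> U' \<and> smooth_on U' h \<and> (\<forall>x\<in>M \<inter> U'. h x = T x)"
    using to q unfolding time_orientation_def smooth_on_set_def by blast
  then obtain U' h where hh0: "open U'" "q \<in> U'" "smooth_on U' h" "\<forall>x\<in>M \<inter> U'. h x = T x"
    by blast
  have hh: "open U'" "q \<in> U'" "smooth_on U' h" "\<And>x. x \<in> M \<inter> U' \<Longrightarrow> h x = T x"
    using hh0 by auto
  have Tprop: "\<And>x. x \<in> M \<Longrightarrow> T x \<in> D x \<and> g x (T x) (T x) < 0" using to unfolding time_orientation_def by auto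
  have Dtan: "\<And>x. x \<in> M \<Longrightarrow> D x \<subseteq> tangent_space M x" using sd unfolding smooth_distribution_def by auto
  define L where "L = {y::'a. \<forall>i\<in>Basis - B. y \<bullet> i = 0}"
  define y0 where "y0 = \<phi> q"
  have "y0 \<in> \<phi> ` (M \<inter> U)" unfolding y0_def using q ch(3) by blast
  then have y0VL: "y0 \<in> V" "y0 \<in> L" using ch(8) unfolding L_def by blast+
  have \<psi>y0: "\<psi> y0 = q" using ch(7) ch(3) y0_def by auto
  have VL: "\<exists>x\<in>M \<inter> U. \<phi> x = y \<and> \<psi> y = x" if "y \<in> V" "y \<in> L" for y
  proof -
    have "y \<in> \<phi> ` (M \<inter> U)" using ch(8) that unfolding L_def by blast
    then obtain x where "x \<in> M \<inter> U" "y = \<phi> x" by blast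
    then show ?thesis using ch(7) by auto
  qed
  have slice: "\<forall>i\<in>Basis - B. \<phi> z \<bullet> i = 0" if "z \<in> M \<inter> U" for z
    using ch(8) that by blast
  obtain rq where rq: "rq > 0" "cball q rq \<subseteq> U \<inter> U'"
    using open_contains_cball[of "U \<inter> U'"] ch(1,3) hh(1,2) by blast
  have "continuous (at y0) \<psi>"
    using smooth_diff[OF ch(5) y0VL(1)] differentiable_imp_continuous_within by blast
  then obtain d where d: "d > 0" "\<And>y. dist y y0 < d \<Longrightarrow> dist (\<psi> y) (\<psi> y0) < rq"
    unfolding continuous_at_eps_delta using rq(1) by blast
  obtain r1 where r1: "r1 > 0" "ball y0 r1 \<subseteq> V" using ch(2) y0VL(1) openE by blast
  define r where "r = min r1 d / 2"
  have r: "r > 0" "cball y0 r \<subseteq> V" "\<And>y. y \<in> cball y0 r \<Longrightarrow> \<psi> y \<in> cball q rq"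
  proof -
    show "r > 0" unfolding r_def using r1 d by auto
    show "cball y0 r \<subseteq> V" using r1 \<open>r > 0\<close> unfolding r_def by (auto simp: subset_eq)
    fix y assume "y \<in> cball y0 r"
    then have "dist y y0 < d" using d r1 unfolding r_def by (auto simp: dist_commute)
    then have "dist (\<psi> y) q < rq" using d(2) \<psi>y0 by metis
    then show "\<psi> y \<in> cball q rq" by (simp add: dist_commute)
  qed
  have clL: "closed L"
  proof -
    have "L = (\<Inter>i\<in>Basis - B. {y. y \<bullet> i = 0})" unfolding L_def by auto
    moreover have "closed {y::'a. y \<bullet> i = 0}" for i
      by (rule closed_Collect_eq) (auto intro: continuous_intros)
    ultimately show ?thesis by auto
  qed
  have cvL: "convex L" unfolding L_def convex_def by (auto simp: inner_add_left)
  define K where "K = cball y0 r \<inter> L"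
  have y0K: "y0 \<in> K" unfolding K_def using y0VL r(1) by simp
  have K: "compact K" "convex K" "closed K" "y0 \<in> K" "K \<noteq> {}" "K \<subseteq> cball y0 r"
  proof -
    show "compact K" "convex K" "closed K" "K \<subseteq> cball y0 r" unfolding K_def using clL cvL
      by (auto intro: compact_Int_closed closed_Int convex_Int)
    show "y0 \<in> K" "K \<noteq> {}" using y0K by auto
  qed
  have Kx: "\<psi> y \<in> M \<and> \<psi> y \<in> U \<and> \<psi> y \<in> U' \<and> \<phi> (\<psi> y) = y \<and> \<psi> y \<in> cball q rq \<and> y \<in> V" if "y \<in> K" for y
  proof -
    have yV: "y \<in> V" "y \<in> L" using that r(2) unfolding K_def by auto
    then obtain x where "x \<in> M \<inter> U" "\<phi> x = y" "\<psi> y = x" using VL by blast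
    moreover have "\<psi> y \<in> cball q rq" using r(3) that unfolding K_def by auto
    ultimately show ?thesis using rq(2) yV by auto
  qed
  define Z where "Z y = frechet_derivative \<phi> (at (\<psi> y)) (h (\<psi> y))" for y
  have \<phi>diff: "\<phi> differentiable (at x)" if "x \<in> U" for x using smooth_diff[OF ch(4) that] .
  have \<psi>diff: "\<psi> differentiable (at y)" if "y \<in> V" for y using smooth_diff[OF ch(5) that] .
  have ZL: "Z y \<in> L" if "y \<in> K" for y
  proof -
    define x where "x = \<psi> y"
    have x: "x \<in> M" "x \<in> U" "x \<in> U'" using Kx[OF that] unfolding x_def by auto
    have "h x = T x" using hh(4) x by auto
    then have tan: "h x \<in> tangent_space M x" using Tprop[OF x(1)] Dtan[OF x(1)] by auto
    show ?thesis unfolding L_def Z_def x_def[symmetric]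
      using deriv_in_slice[OF ch(1) x(1) x(2) \<phi>diff[OF x(2)] slice tan] by blast
  qed
  have cbq: "compact (cball q rq)" "convex (cball q rq)" by auto
  have cby: "compact (cball y0 r)" "convex (cball y0 r)" by auto
  obtain C\<psi> where C\<psi>0: "C\<psi>-lipschitz_on (cball y0 r) \<psi>"
    using smooth_lipschitz[OF ch(5) ch(2) cby r(2)] by blast
  have C\<psi>: "C\<psi>-lipschitz_on K \<psi>" using lipschitz_on_subset[OF C\<psi>0 K(6)] .
  have \<psi>K: "\<psi> ` K \<subseteq> cball q rq" using Kx by auto
  obtain Ch where Ch0: "Ch-lipschitz_on (cball q rq) h"
    using smooth_lipschitz[OF hh(3) hh(1) cbq] rq(2) by blast
  have Lipa: "\<exists>C. C-lipschitz_on K (\<lambda>y. h (\<psi> y) \<bullet> i)" if i: "i \<in> Basis" for i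
  proof -
    have "(Ch * C\<psi>)-lipschitz_on K (\<lambda>y. h (\<psi> y))"
      by (rule lipschitz_on_compose2[OF C\<psi> lipschitz_on_subset[OF Ch0 \<psi>K]])
    then have "(1 * (Ch * C\<psi>))-lipschitz_on K (\<lambda>y. h (\<psi> y) \<bullet> i)"
      by (rule lipschitz_on_compose2[OF _ lipschitz_inner]) (use i in simp)
    then show ?thesis by blast
  qed
  have Lipb: "\<exists>C. C-lipschitz_on K (\<lambda>y. dd [i] \<phi> (\<psi> y))" for i
  proof -
    obtain Ci where "Ci-lipschitz_on (cball q rq) (dd [i] \<phi>)"
      using smooth_lipschitz[OF smooth_dd[OF ch(4)] ch(1) cbq] rq(2) by blast
    then have "(Ci * C\<psi>)-lipschitz_on K (\<lambda>y. dd [i] \<phi> (\<psi> y))"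
      by (intro lipschitz_on_compose2[OF C\<psi>] lipschitz_on_subset[OF _ \<psi>K])
    then show ?thesis by blast
  qed
  have Lipt: "\<exists>C. C-lipschitz_on K (\<lambda>y. (h (\<psi> y) \<bullet> i) *\<^sub>R dd [i] \<phi> (\<psi> y))" if i: "i \<in> Basis" for i
  proof -
    obtain Ca where Ca: "Ca-lipschitz_on K (\<lambda>y. h (\<psi> y) \<bullet> i)" using Lipa[OF i] by blast
    obtain Cb where Cb: "Cb-lipschitz_on K (\<lambda>y. dd [i] \<phi> (\<psi> y))" using Lipb by blast
    obtain A where A: "\<forall>y\<in>K. norm (h (\<psi> y) \<bullet> i) \<le> A" using lipschitz_bound[OF K(1) Ca] by blast
    obtain Bb where Bb: "\<forall>y\<in>K. norm (dd [i] \<phi> (\<psi> y)) \<le> Bb" using lipschitz_bound[OF K(1) Cb] by blast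
    have A0: "A \<ge> 0" using A K(4) by (meson norm_ge_zero order_trans)
    have B0: "Bb \<ge> 0" using Bb K(4) by (meson norm_ge_zero order_trans)
    show ?thesis using lipschitz_scaleR[OF Ca Cb _ _ A0 B0] A Bb by force
  qed
  have Zexp: "Z y = (\<Sum>i\<in>Basis. (h (\<psi> y) \<bullet> i) *\<^sub>R dd [i] \<phi> (\<psi> y))" if "y \<in> K" for y
  proof -
    have "\<psi> y \<in> U" using Kx[OF that] by auto
    then have "linear (frechet_derivative \<phi> (at (\<psi> y)))"
      using smooth_deriv[OF ch(4)] has_derivative_linear by blast
    then show ?thesis unfolding Z_def dd_single by (rule linear_basis_expand)
  qed
  obtain CZ where CZ: "CZ-lipschitz_on K Z"
  proof -
    have "\<exists>C. C-lipschitz_on K (\<lambda>y. \<Sum>i\<in>Basis. (h (\<psi> y) \<bullet> i) *\<^sub>R dd [i] \<phi> (\<psi> y))"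
      using lipschitz_sum_ex[where I=Basis and f="\<lambda>i y. (h (\<psi> y) \<bullet> i) *\<^sub>R dd [i] \<phi> (\<psi> y)" and K=K] Lipt by simp
    then obtain C where "C-lipschitz_on K (\<lambda>y. \<Sum>i\<in>Basis. (h (\<psi> y) \<bullet> i) *\<^sub>R dd [i] \<phi> (\<psi> y))"
      by blast
    then have "C-lipschitz_on K Z" by (rule lipschitz_on_transform) (use Zexp in auto)
    then show ?thesis using that by blast
  qed
  have CZ0: "CZ \<ge> 0" using CZ lipschitz_on_nonneg by blast
  obtain Mb where Mb: "\<And>y. y \<in> K \<Longrightarrow> norm (Z y) \<le> Mb" using lipschitz_bound[OF K(1) CZ] by blast
  have Mb0: "Mb \<ge> 0" using Mb[OF K(4)] norm_ge_zero order_trans by blast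
  define G where "G y = Z (closest_point K y)" for y
  have cpK: "closest_point K y \<in> K" for y using closest_point_in_set[OF K(3) K(5)] .
  have cplip: "1-lipschitz_on UNIV (closest_point K)"
    by (rule lipschitz_onI) (use closest_point_lipschitz[OF K(2) K(3) K(5)] in auto)
  have Glip: "(CZ * 1)-lipschitz_on UNIV G"
    unfolding G_def
    by (rule lipschitz_on_compose2[OF cplip lipschitz_on_subset[OF CZ]]) (use cpK in auto)
  have Gbnd: "norm (G y) \<le> Mb" for y unfolding G_def using Mb[OF cpK] .
  have GL: "G y \<in> L" for y unfolding G_def using ZL[OF cpK] .
  have GZ: "G y = Z y" if "y \<in> K" for y unfolding G_def using closest_point_self[OF that] by simp
  define \<tau> where "\<tau> = min (1 / (2 * (CZ + 1))) (r / (Mb + 1))"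
  have tau0: "\<tau> > 0" unfolding \<tau>_def using CZ0 Mb0 r(1) by auto
  have tau1: "(CZ * 1) * \<tau> < 1"
  proof -
    have "CZ * \<tau> \<le> CZ * (1 / (2 * (CZ + 1)))" unfolding \<tau>_def using CZ0 by (intro mult_left_mono) auto
    also have "\<dots> < 1" using CZ0 by (simp add: field_simps)
    finally show ?thesis by simp
  qed
  have tau2: "Mb * \<tau> \<le> r"
  proof -
    have "Mb * \<tau> \<le> Mb * (r / (Mb + 1))" unfolding \<tau>_def using Mb0 by (intro mult_left_mono) auto
    also have "\<dots> \<le> r" using Mb0 r(1) by (simp add: field_simps)
    finally show ?thesis .
  qed
  obtain y where ycont: "continuous_on {0..\<tau>} y"
    and yeq: "\<And>t. t \<in> {0..\<tau>} \<Longrightarrow> y t = y0 + integral {0..t} (\<lambda>s. G (y s))"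
    using picard[OF Glip Gbnd tau0 tau1, of y0] by blast
  have contG: "continuous_on UNIV G" using Glip lipschitz_on_continuous_on by blast
  have cGy: "continuous_on {0..\<tau>} (\<lambda>s. G (y s))"
    by (rule continuous_on_compose2[OF contG ycont]) auto
  have intGy: "(\<lambda>s. G (y s)) integrable_on {a..b}" if "0 \<le> a" "b \<le> \<tau>" for a b
    by (rule integrable_continuous_interval) (rule continuous_on_subset[OF cGy], use that in auto)
  have y00: "y 0 = y0" using yeq[of 0] tau0 by simp
  have ydiff: "norm (y t - y s) \<le> Mb * (t - s)" if "0 \<le> s" "s \<le> t" "t \<le> \<tau>" for s t
  proof -
    have "integral {0..s} (\<lambda>s. G (y s)) + integral {s..t} (\<lambda>s. G (y s)) = integral {0..t} (\<lambda>s. G (y s))"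
      by (rule Henstock_Kurzweil_Integration.integral_combine) (use that intGy in auto)
    then have "y t - y s = integral {s..t} (\<lambda>s. G (y s))"
      using yeq[of t] yeq[of s] that by (auto simp: algebra_simps)
    also have "norm \<dots> \<le> Mb * (t - s)"
      by (rule integral_bound) (use that Gbnd in \<open>auto intro: continuous_on_subset[OF cGy]\<close>)
    finally show ?thesis .
  qed
  have yK: "y t \<in> K" if t: "t \<in> {0..\<tau>}" for t
  proof -
    have "norm (y t - y0) \<le> Mb * (t - 0)" using ydiff[of 0 t] y00 t by auto
    also have "\<dots> \<le> Mb * \<tau>" using t Mb0 by (intro mult_left_mono) auto
    finally have n: "dist y0 (y t) \<le> r" using tau2 by (simp add: dist_norm norm_minus_commute)
    have "y t \<bullet> i = 0" if i: "i \<in> Basis - B" for i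
    proof -
      have "integral {0..t} (\<lambda>s. G (y s)) \<bullet> i = integral {0..t} (\<lambda>s. G (y s) \<bullet> i)"
        using integral_component_eq[OF intGy[of 0 t]] t by simp
      also have "\<dots> = 0" using GL i unfolding L_def by simp
      finally show ?thesis using yeq[OF t] y0VL(2) i unfolding L_def by (simp add: inner_add_left)
    qed
    then show ?thesis unfolding K_def L_def using n by auto
  qed
  have yder: "(y has_vector_derivative G (y t)) (at t)" if t: "t \<in> {0<..<\<tau>}" for t
  proof -
    have t': "t \<in> {0..\<tau>}" using t by auto
    have "((\<lambda>u. integral {0..u} (\<lambda>s. G (y s))) has_vector_derivative G (y t)) (at t within {0..\<tau>})"
      by (rule integral_has_vector_derivative[OF cGy t'])
    then have "((\<lambda>u. y0 + integral {0..u} (\<lambda>s. G (y s))) has_vector_derivative G (y t)) (at t within {0..\<tau>})"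
      by (simp add: has_vector_derivative_add_const[where z=y0, simplified add.commute])
    then have "(y has_vector_derivative G (y t)) (at t within {0..\<tau>})"
      by (rule has_vector_derivative_transform[OF t', rotated]) (use yeq in auto)
    then have "(y has_vector_derivative G (y t)) (at t within {0<..<\<tau>})"
      by (rule has_vector_derivative_within_subset) auto
    then show ?thesis using has_vector_derivative_within_open[OF t] by auto
  qed
  define \<gamma> where "\<gamma> t = \<psi> (y t)" for t
  have \<gamma>M: "\<gamma> t \<in> M" if "t \<in> {0..\<tau>}" for t using Kx[OF yK[OF that]] unfolding \<gamma>_def by auto
  have \<gamma>der: "(\<gamma> has_vector_derivative T (\<gamma> t)) (at t)" if t: "t \<in> {0<..<\<tau>}" for t
  proof -
    have t': "t \<in> {0..\<tau>}" using t by auto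
    define x where "x = \<psi> (y t)"
    have x: "x \<in> M" "x \<in> U" "x \<in> U'" "\<phi> x = y t" "y t \<in> V" using Kx[OF yK[OF t']] unfolding x_def by auto
    have d\<psi>: "(\<psi> has_derivative frechet_derivative \<psi> (at (y t))) (at (y t) within y ` UNIV)"
      using \<psi>diff[OF x(5)] frechet_derivative_works has_derivative_at_withinI by blast
    have "((\<psi> \<circ> y) has_vector_derivative frechet_derivative \<psi> (at (y t)) (G (y t))) (at t)"
      by (rule vector_derivative_diff_chain_within[OF yder[OF t] d\<psi>])
    moreover have "frechet_derivative \<psi> (at (y t)) (G (y t)) = h x"
    proof -
      have "G (y t) = frechet_derivative \<phi> (at x) (h x)"
        using GZ[OF yK[OF t']] unfolding Z_def x_def by simp
      then have "frechet_derivative \<psi> (at (y t)) (G (y t)) = frechet_derivative \<psi> (at (\<phi> x)) (frechet_derivative \<phi> (at x) (h x))"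
        using x(4) by simp
      also have "\<dots> = h x"
        by (rule chain_id[OF ch(1) x(2) ch(7) \<phi>diff[OF x(2)]]) (use \<psi>diff x in auto)
      finally show ?thesis .
    qed
    moreover have "h x = T x" using hh(4) x by auto
    ultimately show ?thesis unfolding \<gamma>_def x_def by (simp add: o_def)
  qed
  have \<gamma>vd: "vector_derivative \<gamma> (at t) = T (\<gamma> t) \<and> \<gamma> differentiable (at t)" if "t \<in> {0<..<\<tau>}" for t
    using \<gamma>der[OF that] vector_derivative_at differentiableI_vector by blast
  have AEint: "AE t in lebesgue. t \<in> {0..\<tau>} \<longrightarrow> t \<in> {0<..<\<tau>}"
    using AE_not_point[of 0] AE_not_point[of \<tau>] by eventually_elim auto
  have hc: "horizontal_curve M D \<gamma> 0 \<tau>"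
    unfolding horizontal_curve_def
  proof (intro conjI)
    show "0 < \<tau>" by (rule tau0)
    show "\<gamma> ` {0..\<tau>} \<subseteq> M" using \<gamma>M by auto
    have ylip: "Mb-lipschitz_on {0..\<tau>} y"
    proof (rule lipschitz_onI)
      fix s t assume st: "s \<in> {0..\<tau>}" "t \<in> {0..\<tau>}"
      show "dist (y s) (y t) \<le> Mb * dist s t"
      proof (cases "s \<le> t")
        case True then show ?thesis using ydiff[of s t] st by (auto simp: dist_norm dist_real_def norm_minus_commute)
      next
        case False then show ?thesis using ydiff[of t s] st by (auto simp: dist_norm dist_real_def)
      qed
    qed (rule Mb0)
    have "(C\<psi> * Mb)-lipschitz_on {0..\<tau>} (\<lambda>t. \<psi> (y t))"
      by (rule lipschitz_on_compose2[OF ylip lipschitz_on_subset[OF C\<psi>]]) (use yK in auto)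
    then show "absolutely_continuous_on {0..\<tau>} \<gamma>" unfolding \<gamma>_def[abs_def] by (rule lipschitz_ac)
    show "AE t in lebesgue. t \<in> {0..\<tau>} \<longrightarrow> \<gamma> differentiable (at t) \<and> vector_derivative \<gamma> (at t) \<in> D (\<gamma> t)"
      using AEint
    proof eventually_elim
      case (elim t)
      show ?case
      proof
        assume t: "t \<in> {0..\<tau>}"
        then have t2: "t \<in> {0<..<\<tau>}" using elim by auto
        then show "\<gamma> differentiable (at t) \<and> vector_derivative \<gamma> (at t) \<in> D (\<gamma> t)"
          using \<gamma>vd[OF t2] Tprop[OF \<gamma>M[OF t]] by auto
      qed
    qed
    have hcont: "continuous_on {0..\<tau>} (\<lambda>t. h (\<psi> (y t)))"
    proof -
      have c\<psi>: "continuous_on V \<psi>" by (rule smooth_cont[OF ch(5) ch(2)])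
      have ch': "continuous_on U' h" by (rule smooth_cont[OF hh(3) hh(1)])
      have "continuous_on {0..\<tau>} (\<lambda>t. \<psi> (y t))"
        by (rule continuous_on_compose2[OF c\<psi> ycont]) (use yK Kx in auto)
      then show ?thesis
        by (rule continuous_on_compose2[OF ch']) (use yK Kx in auto)
    qed
    have intf: "(\<lambda>t. (norm (h (\<psi> (y t))))\<^sup>2) integrable_on {0..\<tau>}"
      by (rule integrable_continuous_interval) (intro continuous_intros hcont)
    have spike: "(norm (vector_derivative \<gamma> (at t)))\<^sup>2 = (norm (h (\<psi> (y t))))\<^sup>2"
      if "t \<in> {0..\<tau>} - {0, \<tau>}" for t
    proof -
      have t2: "t \<in> {0<..<\<tau>}" and t: "t \<in> {0..\<tau>}" using that by auto
      have "\<gamma> t \<in> M \<inter> U'" using Kx[OF yK[OF t]] unfolding \<gamma>_def by auto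
      then show ?thesis using \<gamma>vd[OF t2] hh(4) unfolding \<gamma>_def by auto
    qed
    show "(\<lambda>t. (norm (vector_derivative \<gamma> (at t)))\<^sup>2) integrable_on {0..\<tau>}"
      by (rule integrable_spike_finite[of "{0, \<tau>}", OF _ spike intf]) simp_all
  qed
  have tl: "timelike_fd g T \<gamma> 0 \<tau>"
    unfolding timelike_fd_def using AEint
  proof eventually_elim
    case (elim t)
    show ?case
    proof
      assume t: "t \<in> {0..\<tau>}"
      then have t2: "t \<in> {0<..<\<tau>}" using elim by auto
      then show "g (\<gamma> t) (vector_derivative \<gamma> (at t)) (vector_derivative \<gamma> (at t)) < 0 \<and>
        g (\<gamma> t) (T (\<gamma> t)) (vector_derivative \<gamma> (at t)) < 0"
        using \<gamma>vd[OF t2] Tprop[OF \<gamma>M[OF t]] by auto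
    qed
  qed
  have "\<gamma> 0 = q" unfolding \<gamma>_def using y00 \<psi>y0 by simp
  moreover have "\<gamma> \<tau> \<in> M" using \<gamma>M tau0 by auto
  ultimately show ?thesis unfolding chron_def using hc tl by blast
qed
theorem theorem3p10:
  fixes M :: "'a::euclidean_space set" and D :: "'a \<Rightarrow> 'a set"
    and g :: "'a \<Rightarrow> 'a \<Rightarrow> 'a \<Rightarrow> real" and T :: "'a \<Rightarrow> 'a" and m k :: nat
  assumes "sub_space_time M m D k g T"
    and "compact_space (alexandrov_topology M D g T)"
  shows "\<exists>p\<in>M. chron M D g T p p"
proof (rule ccontr)
  assume nc: "\<not> (\<exists>p\<in>M. chron M D g T p p)"
  define X where "X = alexandrov_topology M D g T"
  have top: "topspace X = M"
    unfolding X_def alexandrov_topology_def topology_generated_by_topspace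
    using chron_in_M[of M D g T] unfolding I_plus_def I_minus_def by blast
  have op: "openin X (I_minus M D g T p)" if "p \<in> M" for p
    unfolding X_def alexandrov_topology_def openin_topology_generated_by_iff
    by (rule generate_topology_on.Basis) (use that in blast)
  have cov: "M \<subseteq> \<Union>((\<lambda>p. I_minus M D g T p) ` M)"
  proof
    fix q assume "q \<in> M"
    then obtain p where "p \<in> M" "chron M D g T q p" using exists_future'[OF assms(1)] by blast
    then show "q \<in> \<Union>((\<lambda>p. I_minus M D g T p) ` M)" unfolding I_minus_def by blast
  qed
  have "compactin X M" using assms(2) top unfolding X_def compact_space_def by simp
  then obtain F where F: "finite F" "F \<subseteq> (\<lambda>p. I_minus M D g T p) ` M" "M \<subseteq> \<Union>F"
    unfolding compactin_def using op cov by (metis (no_types, lifting) imageE)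
  then obtain P where P: "P \<subseteq> M" "finite P" "F = (\<lambda>p. I_minus M D g T p) ` P"
    by (meson finite_subset_image)
  have succ: "\<exists>y\<in>P. chron M D g T x y" if "x \<in> P" for x
  proof -
    have "x \<in> \<Union>F" using that P F by blast
    then show ?thesis using P(3) unfolding I_minus_def by blast
  qed
  have "M \<noteq> {}" using assms(1) unfolding sub_space_time_def by blast
  then have Pne: "P \<noteq> {}" using F P by blast
  define pred where "pred x = {y \<in> P. chron M D g T y x}" for x
  define mx where "mx = Max ((\<lambda>x. card (pred x)) ` P)"
  have "mx \<in> (\<lambda>x. card (pred x)) ` P" unfolding mx_def using P(2) Pne by (intro Max_in) auto
  then obtain x where x: "x \<in> P" "card (pred x) = mx" by auto
  obtain y where y: "y \<in> P" "chron M D g T x y" using succ[OF x(1)] by blast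
  have "pred x \<subseteq> pred y" unfolding pred_def using chron_trans[OF _ y(2)] by blast
  moreover have "x \<in> pred y" "x \<notin> pred x" unfolding pred_def using x y nc P(1) by auto
  ultimately have "pred x \<subset> pred y" by blast
  then have "card (pred x) < card (pred y)"
    by (rule psubset_card_mono[rotated]) (simp add: pred_def P(2))
  moreover have "card (pred y) \<le> mx" unfolding mx_def using y(1) P(2) by simp
  ultimately show False using x(2) by simp
qed


end
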